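(* Let $O,A,B$ be three pairwise distinct points of the plane, $\vec\alpha=\overrightarrow{AO}/OA$, $\vec\beta=\overrightarrow{OB}/OB$, and suppose the oriented angle $\Omega=(\widehat{\vec\alpha,\vec\beta})$ satisfies $\Omega\in\,]0,\pi[$. Let $\mathcal{E}$ be the set of all curves $X:[0,L]\to\mathbb{R}^2$ (with $L=L(X)>0$) such that $X\in W^{2,\infty}(0,L;\mathbb{R}^2)$, $\|X'(s)\|=1$ for all $s$, $X(0)=A$, $X(L)=B$, $X'(0)=\vec\alpha$, $X'(L)=\vec\beta$, and a continuous determination $\phi$ of the angle $\phi(s)=(\widehat{\vec\alpha,X'(s)})$ is nondecreasing. Then there exists a unique curve $X\in\mathcal{E}$ which, in the case $OA=OB$, consists of a single arc of circle of radius $R_a>0$ and length in $]0,R_a\pi[$, and which, in the case $OA\neq OB$, consists of an arc of circle of radius $R_a>0$ with length in $]0,R_a\pi[$ together with a line segment of nonzero length. The radius $R_a$ is unique, depends only on $O,A,B$, and $$\big\|\,\|X''\|\,\big\|_{L^\infty(0,L(X))}=\frac1{R_a}.$$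
   Context: $\|\cdot\|$ is the Euclidean norm on $\mathbb{R}^2$; $\|\,\|X''\|\,\|_{L^\infty}$ is the essential supremum of $s\mapsto\|X''(s)\|$. *)

theory Defs
  imports "HOL-Analysis.Analysis" "HOL-Probability.Essential_Supremum"
begin

text \<open>The plane is modelled as the complex numbers; the Euclidean norm is cmod.\<close>

definition d1 :: "real \<Rightarrow> (real \<Rightarrow> complex) \<Rightarrow> real \<Rightarrow> complex" where
  "d1 L X s = vector_derivative X (at s within {0..L})"

definition d2 :: "real \<Rightarrow> (real \<Rightarrow> complex) \<Rightarrow> real \<Rightarrow> complex" where
  "d2 L X s = vector_derivative (d1 L X) (at s within {0..L})"

text \<open>W^{2,infinity}(0,L): (the continuous representative is) differentiable on [0,L]
  with Lipschitz derivative.\<close>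
definition W2inf :: "real \<Rightarrow> (real \<Rightarrow> complex) \<Rightarrow> bool" where
  "W2inf L X \<longleftrightarrow> (\<forall>s\<in>{0..L}. X differentiable (at s within {0..L}))
      \<and> (\<exists>K. K-lipschitz_on {0..L} (d1 L X))"

definition Linf_d2 :: "real \<Rightarrow> (real \<Rightarrow> complex) \<Rightarrow> ereal" where
  "Linf_d2 L X = esssup (lebesgue_on {0..L}) (\<lambda>s. ereal (norm (d2 L X s)))"

definition in_E :: "complex \<Rightarrow> complex \<Rightarrow> complex \<Rightarrow> real \<Rightarrow> (real \<Rightarrow> complex) \<Rightarrow> bool" where
  "in_E Oc A B L X \<longleftrightarrow>
     (let \<alpha> = (Oc - A) / of_real (norm (Oc - A)); \<beta> = (B - Oc) / of_real (norm (B - Oc)) in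
       L > 0 \<and> W2inf L X \<and> (\<forall>s\<in>{0..L}. norm (d1 L X s) = 1)
       \<and> X 0 = A \<and> X L = B \<and> d1 L X 0 = \<alpha> \<and> d1 L X L = \<beta>
       \<and> (\<exists>\<phi>. continuous_on {0..L} \<phi> \<and> (\<forall>s\<in>{0..L}. d1 L X s = \<alpha> * cis (\<phi> s))
              \<and> mono_on {0..L} \<phi>))"

definition arc_on :: "real \<Rightarrow> real \<Rightarrow> real \<Rightarrow> (real \<Rightarrow> complex) \<Rightarrow> bool" where
  "arc_on R a b X \<longleftrightarrow> (\<exists>c \<theta> \<sigma>. \<sigma> \<in> {-1, 1::real} \<and>
      (\<forall>s\<in>{a..b}. X s = c + of_real R * cis (\<theta> + \<sigma> * (s - a) / R)))"

definition seg_on :: "real \<Rightarrow> real \<Rightarrow> (real \<Rightarrow> complex) \<Rightarrow> bool" where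
  "seg_on a b X \<longleftrightarrow> (\<exists>p u. norm u = 1 \<and> (\<forall>s\<in>{a..b}. X s = p + of_real (s - a) * u))"

definition shape :: "complex \<Rightarrow> complex \<Rightarrow> complex \<Rightarrow> real \<Rightarrow> real \<Rightarrow> (real \<Rightarrow> complex) \<Rightarrow> bool" where
  "shape Oc A B R L X \<longleftrightarrow> R > 0 \<and>
     (if dist Oc A = dist Oc B then 0 < L \<and> L < R * pi \<and> arc_on R 0 L X
      else (\<exists>l. 0 < l \<and> l < L \<and>
              ((l < R * pi \<and> arc_on R 0 l X \<and> seg_on l L X) \<or>
               (L - l < R * pi \<and> seg_on 0 l X \<and> arc_on R l L X))))"

end

theory Submission
  imports Defs
begin
definition arcpt :: "complex \<Rightarrow> complex \<Rightarrow> real \<Rightarrow> real \<Rightarrow> complex" where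
  "arcpt P v R x = P + \<i> * of_real R * v * (1 - cis (x / R))"

lemma cis_ineq: "norm (cis x - cis y) \<le> \<bar>x - y\<bar>"
proof -
  have e0: "cis y * cis (x - y) = cis x" by (simp add: cis_mult)
  have e: "cis x - cis y = cis y * (cis (x - y) - 1)"
    using e0 by (simp add: algebra_simps)
  let ?t = "x - y"
  have "(norm (cis ?t - 1))\<^sup>2 = (cos ?t - 1)\<^sup>2 + (sin ?t)\<^sup>2"
    by (simp add: cmod_power2)
  also have "\<dots> = 2 - 2 * cos ?t" using sin_cos_squared_add[of ?t] by (simp add: power2_eq_square algebra_simps)
  also have "\<dots> = 4 * (sin (?t/2))\<^sup>2"
  proof -
    define h where "h = ?t/2"
    have "?t = 2 * h" unfolding h_def by simp
    thus ?thesis using cos_double_sin[of h] unfolding h_def[symmetric] by simp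
  qed
  also have "\<dots> \<le> 4 * (?t/2)\<^sup>2"
  proof -
    have "(sin (?t/2))\<^sup>2 \<le> (?t/2)\<^sup>2"
      using abs_sin_x_le_abs_x[of "?t/2"] abs_le_square_iff by blast
    thus ?thesis by linarith
  qed
  also have "\<dots> = ?t\<^sup>2" by (simp add: power2_eq_square)
  finally have "norm (cis ?t - 1) \<le> \<bar>?t\<bar>" using abs_le_square_iff[of "norm (cis ?t - 1)" ?t] by simp
  thus ?thesis by (simp add: e norm_mult)
qed

lemma arc_deriv:
  assumes "R \<noteq> 0"
  shows "((\<lambda>s. c + of_real R * cis (\<theta> + \<sigma> * (s - p) / R)) has_vector_derivative
           (\<i> * of_real \<sigma>) * cis (\<theta> + \<sigma> * (s - p) / R)) (at s within S)"
  unfolding has_vector_derivative_def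
  using assms
  by (auto intro!: derivative_eq_intros simp: algebra_simps fun_eq_iff scaleR_conv_of_real)

lemma arcpt_deriv:
  assumes "R \<noteq> 0"
  shows "((\<lambda>s. arcpt P v R (s - p)) has_vector_derivative v * cis ((s - p) / R)) (at s within S)"
  unfolding has_vector_derivative_def arcpt_def
  using assms
  by (auto intro!: derivative_eq_intros simp: algebra_simps fun_eq_iff scaleR_conv_of_real)

lemma piece_deriv:
  assumes "W2inf L X" "0 \<le> p" "p < q" "q \<le> L" "s \<in> {p..q}"
    "(X has_vector_derivative D) (at s within {p..q})"
  shows "d1 L X s = D"
proof -
  have "X differentiable (at s within {0..L})" using assms unfolding W2inf_def by auto
  hence "(X has_vector_derivative d1 L X s) (at s within {0..L})"
    unfolding d1_def by (rule vector_derivative_works[THEN iffD1])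
  hence "(X has_vector_derivative d1 L X s) (at s within {p..q})"
    by (rule has_vector_derivative_within_subset) (use assms in auto)
  thus ?thesis using assms vector_derivative_within_closed_interval by metis
qed

lemma cis_angle:
  assumes "\<sigma> \<in> {-1, 1::real}" "0 < m" "m < pi" "cis (\<sigma> * m) = cis \<Omega>" "0 < \<Omega>" "\<Omega> < pi"
  shows "\<sigma> = 1 \<and> m = \<Omega>"
proof -
  have "\<sigma> * m \<in> {-pi<..pi}" using assms by auto
  hence "Arg (cis (\<sigma> * m)) = \<sigma> * m" by (rule Arg_cis)
  moreover have "Arg (cis \<Omega>) = \<Omega>" using assms by (intro Arg_cis) auto
  ultimately have "\<sigma> * m = \<Omega>" using assms(4) by metis
  thus ?thesis using assms by auto
qed

lemma tan_ident:
  assumes "cos \<Omega> \<noteq> -1"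
  shows "\<i> * (1 - cis \<Omega>) = of_real (sin \<Omega> / (1 + cos \<Omega>)) * (1 + cis \<Omega>)"
proof -
  have h: "1 + cos \<Omega> \<noteq> 0" using assms by linarith
  have "sin \<Omega> * sin \<Omega> = (1 - cos \<Omega>) * (1 + cos \<Omega>)" using sin_cos_squared_add[of \<Omega>]
    by (simp add: power2_eq_square algebra_simps)
  thus ?thesis using h by (simp add: complex_eq_iff field_simps cis.sel)
qed

lemma lin_indep:
  assumes "a \<noteq> 0" "b = a * cis \<Omega>" "sin \<Omega> \<noteq> 0"
    "of_real x * a + of_real y * b = of_real x' * a + of_real y' * b"
  shows "x = x' \<and> y = y'"
proof -
  have "a * (of_real (x - x') + of_real (y - y') * cis \<Omega>) = 0"
    using assms(2,4) by (simp add: algebra_simps)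
  hence "of_real (x - x') + of_real (y - y') * cis \<Omega> = 0" using assms(1) by simp
  hence "x - x' + (y - y') * cos \<Omega> = 0" "(y - y') * sin \<Omega> = 0" by (simp_all add: complex_eq_iff)
  thus ?thesis using assms(3) by auto
qed

lemma seg_lemma:
  assumes "seg_on p q X" "W2inf L X" "0 \<le> p" "p < q" "q \<le> L"
  shows "\<forall>s\<in>{p..q}. X s = X p + of_real (s - p) * d1 L X q \<and> d1 L X s = d1 L X q"
proof -
  obtain P u where u: "norm u = 1" "\<forall>s\<in>{p..q}. X s = P + of_real (s - p) * u"
    using assms(1) unfolding seg_on_def by blast
  have d: "d1 L X s = u" if "s \<in> {p..q}" for s
  proof (rule piece_deriv[OF assms(2-5) that])
    have hd: "((\<lambda>s. P + of_real (s - p) * u) has_vector_derivative u) (at s within {p..q})"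
      unfolding has_vector_derivative_def
      by (auto intro!: derivative_eq_intros simp: scaleR_conv_of_real)
    show "(X has_vector_derivative u) (at s within {p..q})"
      by (rule has_vector_derivative_transform[OF that _ hd]) (use u that in auto)
  qed
  have Xp: "X p = P" using u assms(4) by simp
  have dq: "d1 L X q = u" by (rule d) (use assms(4) in simp)
  show ?thesis
  proof
    fix s assume s: "s \<in> {p..q}"
    have "X s = X p + of_real (s - p) * d1 L X q" using u s Xp dq by simp
    moreover have "d1 L X s = d1 L X q" using d[OF s] dq by simp
    ultimately show "X s = X p + of_real (s - p) * d1 L X q \<and> d1 L X s = d1 L X q" by blast
  qed
qed

lemma arc_lemma:
  assumes "arc_on R p q X" "W2inf L X" "0 \<le> p" "p < q" "q \<le> L" "R > 0" "q - p < R * pi"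
    "d1 L X p = v" "d1 L X q = v * cis \<Omega>" "v \<noteq> 0" "0 < \<Omega>" "\<Omega> < pi"
  shows "q - p = R * \<Omega> \<and> (\<forall>s\<in>{p..q}. X s = arcpt (X p) v R (s - p))"
proof -
  obtain c \<theta> \<sigma> where cs: "\<sigma> \<in> {-1, 1::real}"
    "\<forall>s\<in>{p..q}. X s = c + of_real R * cis (\<theta> + \<sigma> * (s - p) / R)"
    using assms(1) unfolding arc_on_def by blast
  have d: "d1 L X s = (\<i> * of_real \<sigma>) * cis (\<theta> + \<sigma> * (s - p) / R)" if "s \<in> {p..q}" for s
  proof (rule piece_deriv[OF assms(2-5) that])
    show "(X has_vector_derivative (\<i> * of_real \<sigma>) * cis (\<theta> + \<sigma> * (s - p) / R)) (at s within {p..q})"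
      by (rule has_vector_derivative_transform[OF that _ arc_deriv]) (use cs assms in auto)
  qed
  have dp: "\<i> * of_real \<sigma> * cis \<theta> = v" using d[of p] assms by simp
  have dq: "\<i> * of_real \<sigma> * cis (\<theta> + \<sigma> * (q - p) / R) = v * cis \<Omega>" using d[of q] assms by simp
  have e: "cis (\<theta> + \<sigma> * (q - p) / R) = cis \<theta> * cis (\<sigma> * ((q - p) / R))" by (simp add: cis_mult)
  have "v * cis (\<sigma> * ((q - p) / R)) = \<i> * of_real \<sigma> * cis \<theta> * cis (\<sigma> * ((q - p) / R))" using dp by simp
  also have "\<dots> = v * cis \<Omega>" using dq e by (simp add: mult.assoc)
  finally have "v * cis (\<sigma> * ((q - p) / R)) = v * cis \<Omega>" .
  hence ceq: "cis (\<sigma> * ((q - p) / R)) = cis \<Omega>" using assms(10) by simp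
  have p1: "0 < (q - p) / R" using assms(4,6) by simp
  have p2: "(q - p) / R < pi" using assms(6,7) by (simp add: divide_less_eq mult.commute)
  have sm: "\<sigma> = 1" "(q - p) / R = \<Omega>"
    using cis_angle[OF cs(1) p1 p2 ceq assms(11,12)] by auto
  have ct: "cis \<theta> = - \<i> * v" using dp sm by (auto simp: algebra_simps)
  have Xp: "X p = c + of_real R * cis \<theta>" using cs assms by auto
  have "X s = arcpt (X p) v R (s - p)" if "s \<in> {p..q}" for s
  proof -
    have "X s = c + of_real R * (cis \<theta> * cis ((s - p) / R))" using cs that sm by (simp add: cis_mult)
    thus ?thesis unfolding arcpt_def Xp ct by (simp add: algebra_simps)
  qed
  moreover have "q - p = R * \<Omega>" using sm(2) assms(6) by (simp add: field_simps)
  ultimately show ?thesis by blast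
qed

lemma lebesgue_on_single: "x \<in> {0..L::real} \<Longrightarrow> {x} \<in> sets (lebesgue_on {0..L})"
  by (subst sets_restrict_space_iff) auto

lemma lebesgue_on_Ioo: "0 \<le> p \<Longrightarrow> q \<le> L \<Longrightarrow> {p<..<q} \<in> sets (lebesgue_on {0..L::real})"
  by (subst sets_restrict_space_iff) auto

lemma lebesgue_on_single0: "x \<in> {0..L::real} \<Longrightarrow> emeasure (lebesgue_on {0..L}) {x} = 0"
  by (subst emeasure_restrict_space) (auto simp: emeasure_completion emeasure_lborel_singleton)

lemma lebesgue_on_Ioo_meas: "0 \<le> p \<Longrightarrow> p \<le> q \<Longrightarrow> q \<le> L \<Longrightarrow> emeasure (lebesgue_on {0..L::real}) {p<..<q} = ennreal (q - p)"
  by (subst emeasure_restrict_space) (auto simp: emeasure_completion emeasure_lborel_Ioo)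

lemma esssup_piece:
  fixes f :: "real \<Rightarrow> real"
  assumes "0 \<le> p" "p < q" "q \<le> L" "finite E" "c > 0"
    and f: "\<And>s. s \<in> {0..L} \<Longrightarrow> s \<notin> E \<Longrightarrow> f s = (if p < s \<and> s < q then c else 0)"
  shows "esssup (lebesgue_on {0..L}) (\<lambda>s. ereal (f s)) = ereal c"
proof -
  let ?M = "lebesgue_on {0..L}"
  let ?h = "\<lambda>s. ereal (if s \<in> {p<..<q} then c else 0)"
  have h0: "(\<lambda>s. if s \<in> {p<..<q} then c else 0::real) \<in> borel_measurable ?M"
    by (rule measurable_If_set[OF measurable_const measurable_const])
       (use lebesgue_on_Ioo assms in auto)
  have hm: "?h \<in> borel_measurable ?M" using borel_measurable_ereal[OF h0] by simp
  have fm: "(\<lambda>s. ereal (f s)) \<in> borel_measurable ?M"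
  proof (rule measurable_discrete_difference[OF hm, of "E \<inter> {0..L}"])
    show "countable (E \<inter> {0..L})" using assms by (simp add: countable_finite)
  qed (use lebesgue_on_single f in auto)
  have ae: "AE s in ?M. s \<notin> E \<inter> {0..L}"
    by (rule AE_discrete_difference) (use assms lebesgue_on_single lebesgue_on_single0 in \<open>auto intro: countable_finite\<close>)
  have le: "esssup ?M (\<lambda>s. ereal (f s)) \<le> ereal c"
  proof (rule esssup_I[OF fm])
    show "AE s in ?M. ereal (f s) \<le> ereal c"
      using ae AE_space[of ?M] by eventually_elim (use f assms in auto)
  qed
  have ge: "\<not> esssup ?M (\<lambda>s. ereal (f s)) < ereal c"
  proof
    assume lt: "esssup ?M (\<lambda>s. ereal (f s)) < ereal c"
    have "AE s in ?M. s \<notin> {p<..<q}"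
      using ae AE_space[of ?M] esssup_AE[of "\<lambda>s. ereal (f s)" ?M]
      by eventually_elim (use f assms lt in force)
    hence "emeasure ?M {p<..<q} = 0"
      by (subst (asm) AE_iff_measurable[of "{p<..<q}"]) (use lebesgue_on_Ioo assms in auto)
    thus False using lebesgue_on_Ioo_meas[of p q L] assms by simp
  qed
  show ?thesis using le ge by simp
qed

lemma integral_piece:
  fixes g F :: "real \<Rightarrow> complex" and L p s :: real
  assumes "continuous_on {0..L} g" "0 \<le> p" "p \<le> s" "s \<le> L"
    "\<And>x. x \<in> {p..s} \<Longrightarrow> (F has_vector_derivative g x) (at x within {p..s})"
  shows "integral {0..s} g = integral {0..p} g + (F s - F p)"
proof -
  have "g integrable_on {0..s}"
    by (rule integrable_continuous_interval, rule continuous_on_subset[OF assms(1)]) (use assms in auto)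
  hence "integral {0..p} g + integral {p..s} g = integral {0..s} g"
    using Henstock_Kurzweil_Integration.integral_combine[where a=0 and c=p and b=s and f=g] assms by auto
  moreover have "integral {p..s} g = F s - F p"
    by (rule integral_unique, rule fundamental_theorem_of_calculus) (use assms in auto)
  ultimately show ?thesis by simp
qed

locale constr =
  fixes a b A :: complex and \<Omega> dA dB t d R l1 l2 L :: real
    and \<phi> :: "real \<Rightarrow> real" and g X :: "real \<Rightarrow> complex"
  assumes a1: "norm a = 1" and bdef: "b = a * cis \<Omega>" and Om: "0 < \<Omega>" "\<Omega> < pi"
    and dApos: "dA > 0" and dBpos: "dB > 0"
    and tdef: "t = sin \<Omega> / (1 + cos \<Omega>)" and ddef: "d = min dA dB" and Rdef: "R = d / t"
    and l1def: "l1 = dA - d" and l2def: "l2 = dB - d" and Ldef: "L = l1 + R * \<Omega> + l2"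
    and phidef: "\<phi> = (\<lambda>s. min (max ((s - l1) / R) 0) \<Omega>)"
    and gdef: "g = (\<lambda>s. a * cis (\<phi> s))"
    and Xdef: "X = (\<lambda>s. A + integral {0..s} g)"
begin

lemma cos_gt: "1 + cos \<Omega> > 0"
  using cos_monotone_0_pi[of \<Omega> pi] Om by simp

lemma sin_gt: "sin \<Omega> > 0" using sin_gt_zero Om by simp

lemma t_pos: "t > 0" using cos_gt sin_gt tdef by simp

lemma Rt: "R * t = d" using t_pos Rdef by simp

lemma R_pos: "R > 0" using t_pos Rdef ddef dApos dBpos by simp

lemma l_nonneg: "l1 \<ge> 0" "l2 \<ge> 0" using l1def l2def ddef by auto

lemma RO_pos: "R * \<Omega> > 0" using R_pos Om by simp

lemma L_pos: "L > 0" using l_nonneg Ldef RO_pos by linarith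

lemma a_ne: "a \<noteq> 0" using a1 by auto

lemma phi1: "s \<le> l1 \<Longrightarrow> \<phi> s = 0"
  using R_pos Om unfolding phidef by (simp add: divide_nonpos_pos)

lemma phi2: "l1 \<le> s \<Longrightarrow> s \<le> l1 + R * \<Omega> \<Longrightarrow> \<phi> s = (s - l1) / R"
  using R_pos Om unfolding phidef by (auto simp: field_simps)

lemma phi3: "l1 + R * \<Omega> \<le> s \<Longrightarrow> \<phi> s = \<Omega>"
proof -
  assume "l1 + R * \<Omega> \<le> s"
  hence "\<Omega> \<le> (s - l1) / R" using R_pos by (simp add: pos_le_divide_eq mult.commute)
  thus ?thesis using Om unfolding phidef by simp
qed

lemma phi_mono: "mono_on {0..L} \<phi>"
proof (rule mono_onI)
  fix r s :: real assume "r \<le> s"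
  hence "(r - l1) / R \<le> (s - l1) / R" using R_pos by (simp add: divide_right_mono)
  thus "\<phi> r \<le> \<phi> s" unfolding phidef by (auto simp: min_def max_def)
qed

lemma phi_cont: "continuous_on {0..L} \<phi>"
  unfolding phidef by (intro continuous_intros) (use R_pos in auto)

lemma phi_lip: "\<bar>\<phi> x - \<phi> y\<bar> \<le> \<bar>x - y\<bar> / R"
proof -
  have "\<bar>\<phi> x - \<phi> y\<bar> \<le> \<bar>(x - l1) / R - (y - l1) / R\<bar>"
    unfolding phidef by (auto simp: min_def max_def abs_if)
  also have "\<dots> = \<bar>x - y\<bar> / R" using R_pos by (simp add: diff_divide_distrib[symmetric])
  finally show ?thesis .
qed

lemma g_cont: "continuous_on {0..L} g"
  unfolding gdef by (intro continuous_intros phi_cont)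

lemma X_deriv: "s \<in> {0..L} \<Longrightarrow> (X has_vector_derivative g s) (at s within {0..L})"
proof -
  assume s: "s \<in> {0..L}"
  have "((\<lambda>u. integral {0..u} g) has_vector_derivative g s) (at s within {0..L})"
    by (rule integral_has_vector_derivative[OF g_cont s])
  hence "((\<lambda>u. A + integral {0..u} g) has_vector_derivative 0 + g s) (at s within {0..L})"
    by (intro has_vector_derivative_add has_vector_derivative_const)
  thus ?thesis unfolding Xdef by simp
qed

lemma d1_eq: "s \<in> {0..L} \<Longrightarrow> d1 L X s = g s"
  unfolding d1_def using X_deriv L_pos by (intro vector_derivative_within_closed_interval) auto

lemma W2: "W2inf L X"
  unfolding W2inf_def
proof (intro conjI ballI exI)
  fix s assume "s \<in> {0..L}"
  thus "X differentiable (at s within {0..L})" using X_deriv differentiableI_vector by blast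
next
  show "(1 / R)-lipschitz_on {0..L} (d1 L X)"
  proof (rule lipschitz_onI)
    fix x y assume xy: "x \<in> {0..L}" "y \<in> {0..L}"
    have "dist (d1 L X x) (d1 L X y) = norm (a * (cis (\<phi> x) - cis (\<phi> y)))"
      using xy by (simp add: d1_eq gdef dist_norm algebra_simps)
    also have "\<dots> = norm (cis (\<phi> x) - cis (\<phi> y))" by (simp add: norm_mult a1)
    also have "\<dots> \<le> \<bar>\<phi> x - \<phi> y\<bar>" by (rule cis_ineq)
    also have "\<dots> \<le> \<bar>x - y\<bar> / R" by (rule phi_lip)
    finally show "dist (d1 L X x) (d1 L X y) \<le> 1 / R * dist x y" by (simp add: dist_real_def)
  qed (use R_pos in simp)
qed

lemma X0: "X 0 = A" unfolding Xdef by simp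

lemma Xi: "s \<in> {0..l1} \<Longrightarrow> X s = A + of_real s * a"
proof -
  assume s: "s \<in> {0..l1}"
  have "integral {0..s} g = integral {0..0} g + ((of_real s * a) - (of_real 0 * a))"
  proof (rule integral_piece[OF g_cont])
    fix x assume x: "x \<in> {0..s}"
    have "((\<lambda>x. of_real x * a) has_vector_derivative a) (at x within {0..s})"
      unfolding has_vector_derivative_def
      by (auto intro!: derivative_eq_intros simp: scaleR_conv_of_real)
    moreover have "g x = a" using x s phi1 unfolding gdef by simp
    ultimately show "((\<lambda>x. of_real x * a) has_vector_derivative g x) (at x within {0..s})" by simp
  qed (use s l_nonneg Ldef RO_pos in auto)
  thus ?thesis unfolding Xdef by simp
qed

lemma Xii: "s \<in> {l1..l1 + R * \<Omega>} \<Longrightarrow> X s = arcpt (A + of_real l1 * a) a R (s - l1)"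
proof -
  assume s: "s \<in> {l1..l1 + R * \<Omega>}"
  let ?F = "\<lambda>x. arcpt (A + of_real l1 * a) a R (x - l1)"
  have "integral {0..s} g = integral {0..l1} g + (?F s - ?F l1)"
  proof (rule integral_piece[OF g_cont])
    fix x assume x: "x \<in> {l1..s}"
    have "(?F has_vector_derivative a * cis ((x - l1) / R)) (at x within {l1..s})"
      by (rule arcpt_deriv) (use R_pos in simp)
    moreover have "g x = a * cis ((x - l1) / R)" using x s phi2 unfolding gdef by simp
    ultimately show "(?F has_vector_derivative g x) (at x within {l1..s})" by simp
  qed (use s l_nonneg Ldef RO_pos in auto)
  moreover have "integral {0..l1} g = of_real l1 * a" using Xi[of l1] l_nonneg unfolding Xdef by simp
  moreover have "?F l1 = A + of_real l1 * a" by (simp add: arcpt_def)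
  ultimately have "integral {0..s} g = ?F s - A" by simp
  thus ?thesis unfolding Xdef by simp
qed

lemma arc_end: "arcpt P a R (R * \<Omega>) = P + of_real d * (a + b)"
proof -
  have "cos \<Omega> \<noteq> -1" using cos_gt by simp
  from tan_ident[OF this] have e: "\<i> * (1 - cis \<Omega>) = of_real t * (1 + cis \<Omega>)" using tdef by simp
  have "arcpt P a R (R * \<Omega>) = P + of_real R * a * (\<i> * (1 - cis \<Omega>))"
    unfolding arcpt_def using R_pos by (simp add: mult_ac)
  also have "\<dots> = P + of_real R * a * (of_real t * (1 + cis \<Omega>))" by (simp only: e)
  also have "\<dots> = P + of_real (R * t) * (a + b)" unfolding bdef by (simp add: algebra_simps)
  finally show ?thesis using Rt by simp
qed

lemma Xiii: "s \<in> {l1 + R * \<Omega>..L} \<Longrightarrow> X s = A + of_real (l1 + d) * a + of_real d * b + of_real (s - l1 - R * \<Omega>) * b"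
proof -
  assume s: "s \<in> {l1 + R * \<Omega>..L}"
  let ?p = "l1 + R * \<Omega>"
  let ?F = "\<lambda>x. of_real (x - ?p) * b"
  have "integral {0..s} g = integral {0..?p} g + (?F s - ?F ?p)"
  proof (rule integral_piece[OF g_cont])
    fix x assume x: "x \<in> {?p..s}"
    have "(?F has_vector_derivative b) (at x within {?p..s})"
      unfolding has_vector_derivative_def
      by (auto intro!: derivative_eq_intros simp: scaleR_conv_of_real)
    moreover have "g x = b" using x s phi3 unfolding gdef bdef by simp
    ultimately show "(?F has_vector_derivative g x) (at x within {?p..s})" by simp
  qed (use s l_nonneg Ldef RO_pos in auto)
  moreover have "X ?p = A + of_real (l1 + d) * a + of_real d * b"
  proof -
    have "X ?p = arcpt (A + of_real l1 * a) a R (?p - l1)"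
      using Xii[of ?p] l_nonneg R_pos Om by simp
    also have "?p - l1 = R * \<Omega>" by simp
    finally show ?thesis using arc_end by (simp add: algebra_simps)
  qed
  moreover have "?F ?p = 0" by simp
  ultimately have "integral {0..s} g = of_real (l1 + d) * a + of_real d * b + ?F s"
    unfolding Xdef by simp
  thus ?thesis unfolding Xdef by simp
qed

lemma XL: "X L = A + of_real dA * a + of_real dB * b"
proof -
  have "X L = A + of_real (l1 + d) * a + of_real d * b + of_real (L - l1 - R * \<Omega>) * b"
    using Xiii[of L] l_nonneg R_pos Om Ldef by simp
  also have "L - l1 - R * \<Omega> = dB - d" using Ldef l2def by simp
  also have "l1 + d = dA" using l1def by simp
  finally show ?thesis by (simp add: algebra_simps)
qed

end

context constr begin

lemma arc_end_gen: "r > 0 \<Longrightarrow> arcpt P a r (r * \<Omega>) = P + of_real (r * t) * (a + b)"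
proof -
  assume r: "r > 0"
  have "cos \<Omega> \<noteq> -1" using cos_gt by simp
  from tan_ident[OF this] have e: "\<i> * (1 - cis \<Omega>) = of_real t * (1 + cis \<Omega>)" using tdef by simp
  have "arcpt P a r (r * \<Omega>) = P + of_real r * a * (\<i> * (1 - cis \<Omega>))"
    unfolding arcpt_def using r by (simp add: mult_ac)
  also have "\<dots> = P + of_real r * a * (of_real t * (1 + cis \<Omega>))" by (simp only: e)
  also have "\<dots> = P + of_real (r * t) * (a + b)" unfolding bdef by (simp add: algebra_simps)
  finally show ?thesis .
qed

lemma d2_eq:
  assumes s: "s \<in> {0..L}"
  shows "d2 L X s = vector_derivative g (at s within {0..L})"
proof -
  have "(d1 L X has_vector_derivative f') (at s within {0..L}) \<longleftrightarrow>
        (g has_vector_derivative f') (at s within {0..L})" for f'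
  proof
    assume "(d1 L X has_vector_derivative f') (at s within {0..L})"
    thus "(g has_vector_derivative f') (at s within {0..L})"
      by (rule has_vector_derivative_transform[OF s, rotated]) (simp add: d1_eq)
  next
    assume "(g has_vector_derivative f') (at s within {0..L})"
    thus "(d1 L X has_vector_derivative f') (at s within {0..L})"
      by (rule has_vector_derivative_transform[OF s, rotated]) (simp add: d1_eq)
  qed
  thus ?thesis unfolding d2_def vector_derivative_def by simp
qed

lemma vd_at:
  assumes "s \<in> {0..L}" "open S" "s \<in> S" "\<And>y. y \<in> S \<Longrightarrow> g y = h y"
    "(h has_vector_derivative D) (at s)"
  shows "d2 L X s = D"
proof -
  have "(g has_vector_derivative D) (at s)"
    by (rule has_vector_derivative_transform_within_open[OF assms(5,2,3)]) (use assms(4) in auto)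
  hence "(g has_vector_derivative D) (at s within {0..L})" by (rule has_vector_derivative_at_within)
  thus ?thesis using d2_eq[OF assms(1)] L_pos assms(1)
    by (simp add: vector_derivative_within_closed_interval)
qed

lemma d2_norm:
  assumes s: "s \<in> {0..L}" "s \<notin> {0, l1, l1 + R * \<Omega>, L}"
  shows "norm (d2 L X s) = (if l1 < s \<and> s < l1 + R * \<Omega> then 1 / R else 0)"
proof -
  consider "s < l1" | "l1 < s \<and> s < l1 + R * \<Omega>" | "l1 + R * \<Omega> < s" using s by force
  thus ?thesis
  proof cases
    case 1
    have "d2 L X s = 0"
    proof (rule vd_at[OF s(1), of "{..<l1}" "\<lambda>_. a"])
      show "g y = a" if "y \<in> {..<l1}" for y using that phi1 unfolding gdef by simp
    qed (use 1 in auto)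
    thus ?thesis using 1 by simp
  next
    case 2
    have "d2 L X s = a * (\<i> * of_real (1 / R)) * cis ((s - l1) / R)"
    proof (rule vd_at[OF s(1), of "{l1<..<l1 + R * \<Omega>}" "\<lambda>y. a * cis ((y - l1) / R)"])
      show "g y = a * cis ((y - l1) / R)" if "y \<in> {l1<..<l1 + R * \<Omega>}" for y
        using that phi2 unfolding gdef by simp
      show "((\<lambda>y. a * cis ((y - l1) / R)) has_vector_derivative a * (\<i> * of_real (1 / R)) * cis ((s - l1) / R)) (at s)"
        unfolding has_vector_derivative_def using R_pos
        by (auto intro!: derivative_eq_intros simp: fun_eq_iff scaleR_conv_of_real algebra_simps)
    qed (use 2 in auto)
    thus ?thesis using 2 R_pos by (simp add: norm_mult norm_divide a1)
  next
    case 3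
    have "d2 L X s = 0"
    proof (rule vd_at[OF s(1), of "{l1 + R * \<Omega><..}" "\<lambda>_. b"])
      show "g y = b" if "y \<in> {l1 + R * \<Omega><..}" for y using that phi3 unfolding gdef bdef by simp
    qed (use 3 in auto)
    thus ?thesis using 3 by simp
  qed
qed

lemma Linf: "Linf_d2 L X = ereal (1 / R)"
  unfolding Linf_d2_def
proof (rule esssup_piece[of l1 "l1 + R * \<Omega>" L "{0, l1, l1 + R * \<Omega>, L}"])
  show "norm (d2 L X s) = (if l1 < s \<and> s < l1 + R * \<Omega> then 1 / R else 0)"
    if "s \<in> {0..L}" "s \<notin> {0, l1, l1 + R * \<Omega>, L}" for s
    by (rule d2_norm[OF that])
qed (use l_nonneg RO_pos R_pos Ldef in auto)

end

context constr begin

lemma b_ne: "b \<noteq> 0" using a_ne bdef by simp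

lemma lin: "of_real x * a + of_real y * b = of_real x' * a + of_real y' * b \<Longrightarrow> x = x' \<and> y = y'"
  by (rule lin_indep[OF a_ne bdef]) (use sin_gt in auto)


lemma arcpt_arc:
  assumes "\<And>s. s \<in> {p..q} \<Longrightarrow> Y s = arcpt P a R (s - p)"
  shows "arc_on R p q Y"
  unfolding arc_on_def
proof (intro exI conjI ballI)
  let ?\<theta> = "Arg (- \<i> * a)"
  have ct: "cis ?\<theta> = - \<i> * a"
  proof -
    have "- \<i> * a \<noteq> 0" using a_ne by simp
    hence "cis ?\<theta> = sgn (- \<i> * a)" by (rule cis_Arg)
    also have "\<dots> = - \<i> * a" using a1 by (simp add: sgn_div_norm norm_mult)
    finally show ?thesis .
  qed
  show "(1::real) \<in> {-1, 1}" by simp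
  fix s assume s: "s \<in> {p..q}"
  have "cis (?\<theta> + 1 * (s - p) / R) = cis ?\<theta> * cis ((s - p) / R)" by (simp add: cis_mult)
  thus "Y s = (P + \<i> * of_real R * a) + of_real R * cis (?\<theta> + 1 * (s - p) / R)"
    using assms[OF s] ct unfolding arcpt_def by (simp add: algebra_simps)
qed

lemma shape_ok:
  "R > 0 \<and> (if dA = dB then 0 < L \<and> L < R * pi \<and> arc_on R 0 L X
      else (\<exists>l. 0 < l \<and> l < L \<and>
              ((l < R * pi \<and> arc_on R 0 l X \<and> seg_on l L X) \<or>
               (L - l < R * pi \<and> seg_on 0 l X \<and> arc_on R l L X))))"
proof -
  have RO: "R * \<Omega> < R * pi" using R_pos Om by simp
  consider (e) "dA = dB" | (g) "dA > dB" | (l) "dA < dB" by linarith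
  thus ?thesis
  proof cases
    case e
    have l0: "l1 = 0" "l2 = 0" using e l1def l2def ddef by auto
    have LL: "L = R * \<Omega>" using Ldef l0 by simp
    have "arc_on R 0 L X"
      by (rule arcpt_arc) (use Xii l0 LL in simp)
    thus ?thesis using e R_pos L_pos LL RO by simp
  next
    case g
    have l0: "l1 = dA - dB" "l2 = 0" using g l1def l2def ddef by auto
    have LL: "L = l1 + R * \<Omega>" using Ldef l0 by simp
    have "seg_on 0 l1 X" unfolding seg_on_def
      by (rule exI[of _ A], rule exI[of _ a]) (use a1 Xi in simp)
    moreover have "arc_on R l1 L X"
      by (rule arcpt_arc) (use Xii LL in simp)
    moreover have "0 < l1" "l1 < L" "L - l1 < R * pi" using l0 g LL RO RO_pos by auto
    ultimately show ?thesis using g R_pos by auto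
  next
    case l
    have l0: "l1 = 0" "l2 = dB - dA" "d = dA" using l l1def l2def ddef by auto
    have LL: "L = R * \<Omega> + l2" using Ldef l0 by simp
    have "arc_on R 0 (R * \<Omega>) X"
      by (rule arcpt_arc) (use Xii l0 in simp)
    moreover have "seg_on (R * \<Omega>) L X" unfolding seg_on_def
    proof (rule exI[of _ "A + of_real d * a + of_real d * b"], rule exI[of _ b], intro conjI ballI)
      show "norm b = 1" using a1 bdef by (simp add: norm_mult)
      fix s assume "s \<in> {R * \<Omega>..L}"
      hence "X s = A + of_real (l1 + d) * a + of_real d * b + of_real (s - l1 - R * \<Omega>) * b"
        using l0 by (intro Xiii) simp
      thus "X s = A + of_real d * a + of_real d * b + of_real (s - R * \<Omega>) * b" using l0 by simp
    qed
    moreover have "0 < R * \<Omega>" "R * \<Omega> < L" using l0 l LL RO_pos by auto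
    ultimately show ?thesis using l R_pos RO by auto
  qed
qed

lemma uniq:
  assumes L'pos: "L' > 0" and W: "W2inf L' X'" and X0': "X' 0 = A"
    and XL': "X' L' = A + of_real dA * a + of_real dB * b"
    and D0: "d1 L' X' 0 = a" and DL: "d1 L' X' L' = b"
    and R'pos: "R' > 0"
    and sh: "(dA = dB \<and> L' < R' * pi \<and> arc_on R' 0 L' X') \<or>
             (dA \<noteq> dB \<and> (\<exists>l. 0 < l \<and> l < L' \<and>
              ((l < R' * pi \<and> arc_on R' 0 l X' \<and> seg_on l L' X') \<or>
               (L' - l < R' * pi \<and> seg_on 0 l X' \<and> arc_on R' l L' X'))))"
  shows "R' = R \<and> L' = L \<and> (\<forall>s\<in>{0..L}. X' s = X s)"
proof -
  have DLc: "d1 L' X' L' = a * cis \<Omega>" using DL bdef by simp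
  have Rtpos: "R' * t > 0" using R'pos t_pos by simp
  consider (eq) "dA = dB" "L' < R' * pi" "arc_on R' 0 L' X'"
    | (as) l where "0 < l" "l < L'" "l < R' * pi" "arc_on R' 0 l X'" "seg_on l L' X'"
    | (sa) l where "0 < l" "l < L'" "L' - l < R' * pi" "seg_on 0 l X'" "arc_on R' l L' X'"
    using sh by blast
  thus ?thesis
  proof cases
    case eq
    have arc: "L' - 0 = R' * \<Omega> \<and> (\<forall>s\<in>{0..L'}. X' s = arcpt (X' 0) a R' (s - 0))"
      by (rule arc_lemma[OF eq(3) W]) (use L'pos R'pos eq D0 DLc a_ne Om in auto)
    hence L'eq: "L' = R' * \<Omega>" by simp
    have arcA: "X' s = arcpt A a R' s" if "s \<in> {0..L'}" for s
    proof -
      have "X' s = arcpt (X' 0) a R' (s - 0)" using arc that by blast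
      thus ?thesis using X0' by simp
    qed
    have "X' L' = arcpt A a R' (R' * \<Omega>)" using arcA[of L'] L'pos L'eq by simp
    also have "\<dots> = A + of_real (R' * t) * (a + b)" by (rule arc_end_gen[OF R'pos])
    finally have "X' L' = A + of_real (R' * t) * (a + b)" .
    hence "of_real (R' * t) * a + of_real (R' * t) * b = of_real dA * a + of_real dB * b"
      using XL' by (simp add: algebra_simps)
    from lin[OF this] have h: "R' * t = dA" "R' * t = dB" by auto
    have dd: "d = R' * t" using h ddef by simp
    have RR: "R' = R" using dd Rdef t_pos by (auto simp: field_simps)
    have l0: "l1 = 0" "l2 = 0" using l1def l2def ddef h by auto
    have LL: "L' = L" using Ldef l0 L'eq RR by simp
    have "X' s = X s" if "s \<in> {0..L}" for s
    proof -
      have "X s = arcpt (A + of_real l1 * a) a R (s - l1)" using that Xii l0 Ldef by simp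
      moreover have "X' s = arcpt A a R' s" using arcA that LL by simp
      ultimately show ?thesis using RR l0 by simp
    qed
    thus ?thesis using RR LL by simp
  next
    case as
    have seg: "\<forall>s\<in>{l..L'}. X' s = X' l + of_real (s - l) * d1 L' X' L' \<and> d1 L' X' s = d1 L' X' L'"
      by (rule seg_lemma[OF as(5) W]) (use as in auto)
    have segb: "X' s = X' l + of_real (s - l) * b" if "s \<in> {l..L'}" for s
    proof -
      have "X' s = X' l + of_real (s - l) * d1 L' X' L'" using seg that by blast
      thus ?thesis using DL by simp
    qed
    have "l \<in> {l..L'}" using as by simp
    hence "d1 L' X' l = d1 L' X' L'" using seg by blast
    hence Dl: "d1 L' X' l = a * cis \<Omega>" using DLc by simp
    have arc: "l - 0 = R' * \<Omega> \<and> (\<forall>s\<in>{0..l}. X' s = arcpt (X' 0) a R' (s - 0))"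
      by (rule arc_lemma[OF as(4) W]) (use as R'pos D0 Dl a_ne Om in auto)
    hence leq: "l = R' * \<Omega>" by simp
    have arcA: "X' s = arcpt A a R' s" if "s \<in> {0..l}" for s
    proof -
      have "X' s = arcpt (X' 0) a R' (s - 0)" using arc that by blast
      thus ?thesis using X0' by simp
    qed
    have "X' l = arcpt A a R' (R' * \<Omega>)" using arcA[of l] as(1) leq by simp
    also have "\<dots> = A + of_real (R' * t) * (a + b)" by (rule arc_end_gen[OF R'pos])
    finally have Xl: "X' l = A + of_real (R' * t) * (a + b)" .
    have "X' L' = X' l + of_real (L' - l) * b" using segb[of L'] as by simp
    hence "of_real (R' * t) * a + of_real (R' * t + (L' - l)) * b = of_real dA * a + of_real dB * b"
      using XL' Xl by (simp add: algebra_simps)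
    from lin[OF this] have h: "R' * t = dA" "R' * t + (L' - l) = dB" by auto
    have dd: "d = dA" "d = R' * t" using h ddef as by auto
    have RR: "R' = R" using dd Rdef t_pos by (auto simp: field_simps)
    have l0: "l1 = 0" "l2 = L' - l" using l1def l2def dd h by auto
    have LL: "L' = L" using Ldef l0 leq RR by simp
    have "X' s = X s" if s: "s \<in> {0..L}" for s
    proof (cases "s \<le> l")
      case True
      have "X s = arcpt (A + of_real l1 * a) a R (s - l1)" using s True Xii l0 leq RR by simp
      moreover have "X' s = arcpt A a R' s" using arcA s True by simp
      ultimately show ?thesis using RR l0 by simp
    next
      case False
      have "s \<in> {l1 + R * \<Omega>..L}" using s False l0 leq RR by auto
      hence "X s = A + of_real (l1 + d) * a + of_real d * b + of_real (s - l1 - R * \<Omega>) * b"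
        by (rule Xiii)
      moreover have "X' s = X' l + of_real (s - l) * b" using segb[of s] s False LL by simp
      ultimately show ?thesis using Xl l0 leq RR dd(2) by (simp add: algebra_simps flip: of_real_mult) (metis add_right_cancel)
    qed
    thus ?thesis using RR LL by simp
  next
    case sa
    have seg: "\<forall>s\<in>{0..l}. X' s = X' 0 + of_real (s - 0) * d1 L' X' l \<and> d1 L' X' s = d1 L' X' l"
      by (rule seg_lemma[OF sa(4) W]) (use sa in auto)
    have "0 \<in> {0..l}" using sa by simp
    hence "d1 L' X' 0 = d1 L' X' l" using seg by blast
    hence Dl: "d1 L' X' l = a" using D0 by simp
    have segA: "X' s = A + of_real s * a" if "s \<in> {0..l}" for s
    proof -
      have "X' s = X' 0 + of_real (s - 0) * d1 L' X' l" using seg that by blast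
      thus ?thesis using X0' Dl by simp
    qed
    have arc: "L' - l = R' * \<Omega> \<and> (\<forall>s\<in>{l..L'}. X' s = arcpt (X' l) a R' (s - l))"
      by (rule arc_lemma[OF sa(5) W]) (use sa R'pos Dl DLc a_ne Om in auto)
    hence leq: "L' - l = R' * \<Omega>" by simp
    have Xl: "X' l = A + of_real l * a" using segA[of l] sa by simp
    have arcl: "X' s = arcpt (A + of_real l * a) a R' (s - l)" if "s \<in> {l..L'}" for s
    proof -
      have "X' s = arcpt (X' l) a R' (s - l)" using arc that by blast
      thus ?thesis using Xl by simp
    qed
    have "X' L' = arcpt (A + of_real l * a) a R' (R' * \<Omega>)" using arcl[of L'] sa leq by simp
    also have "\<dots> = A + of_real l * a + of_real (R' * t) * (a + b)" by (rule arc_end_gen[OF R'pos])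
    finally have "X' L' = A + of_real l * a + of_real (R' * t) * (a + b)" .
    hence "of_real (l + R' * t) * a + of_real (R' * t) * b = of_real dA * a + of_real dB * b"
      using XL' by (simp add: algebra_simps)
    from lin[OF this] have h: "l + R' * t = dA" "R' * t = dB" by auto
    have dd: "d = dB" "d = R' * t" using h ddef sa by auto
    have RR: "R' = R" using dd Rdef t_pos by (auto simp: field_simps)
    have l0: "l1 = l" "l2 = 0" using l1def l2def dd h by auto
    have LL: "L' = L" using Ldef l0 leq RR by simp
    have "X' s = X s" if s: "s \<in> {0..L}" for s
    proof (cases "s \<le> l")
      case True
      have "X s = A + of_real s * a" using s True Xi l0 by simp
      moreover have "X' s = A + of_real s * a" using segA s True by simp
      ultimately show ?thesis by simp
    next
      case False
      have "X s = arcpt (A + of_real l1 * a) a R (s - l1)" using s False Xii l0 leq RR LL Ldef by simp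
      moreover have "X' s = arcpt (A + of_real l * a) a R' (s - l)" using arcl s False LL by simp
      ultimately show ?thesis using RR l0 by simp
    qed
    thus ?thesis using RR LL by simp
  qed
qed

end

theorem lemma4p2:
  fixes Oc A B :: complex
  assumes "Oc \<noteq> A" and "Oc \<noteq> B" and "A \<noteq> B"
    and "Arg (((B - Oc) / of_real (norm (B - Oc))) / ((Oc - A) / of_real (norm (Oc - A))))
           \<in> {0<..<pi}"
  shows "\<exists>R L X. in_E Oc A B L X \<and> shape Oc A B R L X \<and> Linf_d2 L X = ereal (1 / R)
           \<and> (\<forall>R' L' X'. in_E Oc A B L' X' \<and> shape Oc A B R' L' X' \<longrightarrow>
                 R' = R \<and> L' = L \<and> (\<forall>s\<in>{0..L}. X' s = X s))"
proof -
  define a where "a = (Oc - A) / of_real (norm (Oc - A))"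
  define b where "b = (B - Oc) / of_real (norm (B - Oc))"
  define dA where "dA = norm (Oc - A)"
  define dB where "dB = norm (B - Oc)"
  define \<Omega> where "\<Omega> = Arg (b / a)"
  have dApos: "dA > 0" using assms(1) unfolding dA_def by simp
  have dBpos: "dB > 0" using assms(2) unfolding dB_def by simp
  have a1: "norm a = 1" using dApos unfolding a_def dA_def by (simp add: norm_divide)
  have b1: "norm b = 1" using dBpos unfolding b_def dB_def by (simp add: norm_divide)
  have Om: "0 < \<Omega>" "\<Omega> < pi" using assms(4) unfolding \<Omega>_def a_def b_def by auto
  have ane: "a \<noteq> 0" using a1 by auto
  have "cis \<Omega> = sgn (b / a)" unfolding \<Omega>_def using ane b1 by (intro cis_Arg) auto
  also have "\<dots> = b / a" using a1 b1 by (simp add: sgn_div_norm norm_divide)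
  finally have bdef: "b = a * cis \<Omega>" using ane by simp
  have Aa: "A + of_real dA * a = Oc" unfolding a_def dA_def using dApos dA_def by simp
  have Bb: "Oc + of_real dB * b = B" unfolding b_def dB_def using dBpos dB_def by simp
  have BAB: "B = A + of_real dA * a + of_real dB * b" using Aa Bb by simp
  define t where "t = sin \<Omega> / (1 + cos \<Omega>)"
  define d where "d = min dA dB"
  define R where "R = d / t"
  define l1 where "l1 = dA - d"
  define l2 where "l2 = dB - d"
  define L where "L = l1 + R * \<Omega> + l2"
  define \<phi> where "\<phi> = (\<lambda>s. min (max ((s - l1) / R) 0) \<Omega>)"
  define g where "g = (\<lambda>s. a * cis (\<phi> s))"
  define X where "X = (\<lambda>s. A + integral {0..s} g)"
  interpret C: constr a b A \<Omega> dA dB t d R l1 l2 L \<phi> g X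
    by unfold_locales (use a1 bdef Om dApos dBpos in \<open>simp_all add: t_def d_def R_def l1_def l2_def L_def \<phi>_def g_def X_def\<close>)
  have dOA: "dist Oc A = dA" unfolding dA_def by (simp add: dist_norm)
  have dOB: "dist Oc B = dB" unfolding dB_def by (simp add: dist_norm norm_minus_commute)
  have inE: "in_E Oc A B L X"
    unfolding in_E_def Let_def a_def[symmetric] b_def[symmetric]
  proof (intro conjI)
    show "L > 0" by (rule C.L_pos)
    show "W2inf L X" by (rule C.W2)
    show "\<forall>s\<in>{0..L}. norm (d1 L X s) = 1" by (simp add: C.d1_eq g_def norm_mult a1)
    show "X 0 = A" by (rule C.X0)
    show "X L = B" using C.XL BAB by simp
    show "d1 L X 0 = a" using C.d1_eq[of 0] C.L_pos C.phi1[of 0] C.l_nonneg by (simp add: g_def)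
    show "d1 L X L = b" using C.d1_eq[of L] C.L_pos C.phi3[of L] C.l_nonneg C.RO_pos
      by (simp add: g_def bdef L_def)
    show "\<exists>\<phi>. continuous_on {0..L} \<phi> \<and> (\<forall>s\<in>{0..L}. d1 L X s = a * cis (\<phi> s)) \<and> mono_on {0..L} \<phi>"
      using C.phi_cont C.phi_mono C.d1_eq by (auto simp: g_def)
  qed
  have shp: "shape Oc A B R L X"
    unfolding shape_def dOA dOB by (rule C.shape_ok)
  have uq: "R' = R \<and> L' = L \<and> (\<forall>s\<in>{0..L}. X' s = X s)"
    if h: "in_E Oc A B L' X' \<and> shape Oc A B R' L' X'" for R' L' X'
    proof (rule C.uniq)
      show "L' > 0" "W2inf L' X'" "X' 0 = A" "d1 L' X' 0 = a" "d1 L' X' L' = b"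
        using h unfolding in_E_def Let_def a_def[symmetric] b_def[symmetric] by auto
      show "X' L' = A + of_real dA * a + of_real dB * b"
        using h BAB unfolding in_E_def Let_def by auto
      show "R' > 0" using h unfolding shape_def by auto
      show "(dA = dB \<and> L' < R' * pi \<and> arc_on R' 0 L' X') \<or>
             (dA \<noteq> dB \<and> (\<exists>l. 0 < l \<and> l < L' \<and>
              ((l < R' * pi \<and> arc_on R' 0 l X' \<and> seg_on l L' X') \<or>
               (L' - l < R' * pi \<and> seg_on 0 l X' \<and> arc_on R' l L' X'))))"
        using h unfolding shape_def dOA dOB by (auto split: if_splits)
    qed
  show ?thesis using inE shp C.Linf uq by blast
qed

end
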